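(* Let $p\neq q$ be primes. (a) If $1\le a\le m$ and $1\le b\le n$ are integers, then $\langle p^a,q^b\rangle\le_P\langle p^m,q^n\rangle$. (b) If $n\ge1$ and $a,b\ge1$ are integers with $2\le a+b\le n+1$, then $\langle p^a,q^b\rangle\le_P B_n(p,q)$, where $B_n(p,q)=\langle p^n,p^{n-1}q,\ldots,pq^{n-1},q^n\rangle$. (c) Let $V$ be a numerical semigroup generated by $\{n_1,\ldots,n_k\}$ ($k\ge2$), let $d=\gcd(n_1,\ldots,n_{k-1})$ and let $U=\langle n_1/d,\ldots,n_{k-1}/d,n_k\rangle$. Then $U$ and $V$ are polynomially related (namely $U\le_P V$).
   Context: A numerical semigroup is a submonoid of $(\mathbb N,+)$ with finite complement in $\mathbb N$; $\langle A\rangle$ denotes the submonoid generated by $A$. $\mathrm H_S(x)=\sum_{s\in S}x^s$. Numerical semigroups $S$ and $T$ are polynomially related, written $S\le_P T$, if there exist $f(x)\in\mathbb Z[x]$ and an integer $w\ge1$ with $\mathrm H_S(x^w)f(x)=\mathrm H_T(x)$. *)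

theory Defs
  imports "HOL-Computational_Algebra.Computational_Algebra"
begin

definition submonoid_nat :: "nat set \<Rightarrow> bool" where
  "submonoid_nat M \<longleftrightarrow> 0 \<in> M \<and> (\<forall>x\<in>M. \<forall>y\<in>M. x + y \<in> M)"

definition numerical_semigroup :: "nat set \<Rightarrow> bool" where
  "numerical_semigroup S \<longleftrightarrow> submonoid_nat S \<and> finite (UNIV - S)"

definition gen :: "nat set \<Rightarrow> nat set" where
  "gen A = \<Inter>{M. A \<subseteq> M \<and> submonoid_nat M}"

definition hilb :: "nat set \<Rightarrow> int fps" where
  "hilb S = Abs_fps (\<lambda>n. if n \<in> S then 1 else 0)"

text \<open>H_S(x^w): the series sum over s in S of x^(w*s).\<close>
definition hilb_pow :: "nat set \<Rightarrow> nat \<Rightarrow> int fps" where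
  "hilb_pow S w = Abs_fps (\<lambda>n. if (\<exists>s\<in>S. n = w * s) then 1 else 0)"

definition poly_related :: "nat set \<Rightarrow> nat set \<Rightarrow> bool" where
  "poly_related S T \<longleftrightarrow> numerical_semigroup S \<and> numerical_semigroup T \<and>
     (\<exists>(f::int poly) (w::nat). w \<ge> 1 \<and> hilb_pow S w * fps_of_poly f = hilb T)"

definition B_sg :: "nat \<Rightarrow> nat \<Rightarrow> nat \<Rightarrow> nat set" where
  "B_sg n p q = gen {p ^ (n - i) * q ^ i | i. i \<le> n}"

end

theory Submission
  imports Defs "HOL-Number_Theory.Cong"
begin


lemma submonoid_gen: "submonoid_nat (gen A)"
  unfolding submonoid_nat_def gen_def by auto

lemma gen_sub: "A \<subseteq> gen A"
  unfolding gen_def by auto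

lemma gen_least: "A \<subseteq> M \<Longrightarrow> submonoid_nat M \<Longrightarrow> gen A \<subseteq> M"
  unfolding gen_def by auto

lemma gen_mono: "A \<subseteq> B \<Longrightarrow> gen A \<subseteq> gen B"
  unfolding gen_def by auto

lemma gen_0: "0 \<in> gen A" using submonoid_gen unfolding submonoid_nat_def by auto
lemma gen_add: "x \<in> gen A \<Longrightarrow> y \<in> gen A \<Longrightarrow> x + y \<in> gen A"
  using submonoid_gen unfolding submonoid_nat_def by auto
lemma gen_mult: "x \<in> gen A \<Longrightarrow> k * x \<in> gen A"
  by (induction k) (auto intro: gen_add gen_0)

lemma gen_empty: "gen {} = {0}"
proof -
  have "submonoid_nat {0}" unfolding submonoid_nat_def by auto
  then have "gen {} \<subseteq> {0}" by (intro gen_least) auto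
  then show ?thesis using gen_0 by auto
qed

lemma gen_insert: "gen (insert c A) = {x + c * k | x k. x \<in> gen A}"
proof
  have "submonoid_nat {x + c * k | x k. x \<in> gen A}"
    unfolding submonoid_nat_def
  proof (intro conjI ballI)
    show "0 \<in> {x + c * k | x k. x \<in> gen A}" using gen_0 by force
    fix x y assume "x \<in> {x + c * k | x k. x \<in> gen A}" "y \<in> {x + c * k | x k. x \<in> gen A}"
    then obtain x1 k1 x2 k2 where "x = x1 + c*k1" "y = x2 + c*k2" "x1 \<in> gen A" "x2 \<in> gen A" by auto
    then show "x + y \<in> {x + c * k | x k. x \<in> gen A}"
      by (intro CollectI exI[of _ "x1+x2"] exI[of _ "k1+k2"]) (auto simp: algebra_simps gen_add)
  qed
  moreover have "insert c A \<subseteq> {x + c * k | x k. x \<in> gen A}"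
  proof
    fix y assume "y \<in> insert c A"
    then show "y \<in> {x + c * k | x k. x \<in> gen A}"
    proof
      assume "y = c" then show ?thesis using gen_0 by (intro CollectI exI[of _ 0] exI[of _ 1]) auto
    next
      assume "y \<in> A" then show ?thesis using gen_sub by (intro CollectI exI[of _ y] exI[of _ 0]) auto
    qed
  qed
  ultimately show "gen (insert c A) \<subseteq> {x + c * k | x k. x \<in> gen A}" by (intro gen_least)
next
  show "{x + c * k | x k. x \<in> gen A} \<subseteq> gen (insert c A)"
  proof clarify
    fix x k assume "x \<in> gen A"
    then have "x \<in> gen (insert c A)" using gen_mono[of A "insert c A"] by auto
    moreover have "c * k \<in> gen (insert c A)"
      using gen_mult[of c "insert c A" k] gen_sub[of "insert c A"] by (auto simp: mult.commute)
    ultimately show "x + c * k \<in> gen (insert c A)" by (rule gen_add)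
  qed
qed

lemma gen_image_mult: "gen ((\<lambda>x. d * x) ` A) = (\<lambda>x. d * x) ` gen A"
proof
  have "submonoid_nat ((\<lambda>x. d * x) ` gen A)"
    unfolding submonoid_nat_def
  proof (intro conjI ballI)
    show "0 \<in> (\<lambda>x. d * x) ` gen A" using gen_0 by force
    fix x y assume "x \<in> (\<lambda>x. d * x) ` gen A" "y \<in> (\<lambda>x. d * x) ` gen A"
    then obtain x1 x2 where "x = d*x1" "y = d*x2" "x1 \<in> gen A" "x2 \<in> gen A" by auto
    then show "x + y \<in> (\<lambda>x. d * x) ` gen A"
      by (intro image_eqI[of _ _ "x1+x2"]) (auto simp: algebra_simps gen_add)
  qed
  then show "gen ((\<lambda>x. d * x) ` A) \<subseteq> (\<lambda>x. d * x) ` gen A"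
    using gen_sub by (intro gen_least) auto
next
  have "submonoid_nat {x. d * x \<in> gen ((\<lambda>x. d * x) ` A)}"
    unfolding submonoid_nat_def using gen_0 gen_add by (auto simp: algebra_simps)
  moreover have "A \<subseteq> {x. d * x \<in> gen ((\<lambda>x. d * x) ` A)}"
    using gen_sub[of "(\<lambda>x. d * x) ` A"] by auto
  ultimately have "gen A \<subseteq> {x. d * x \<in> gen ((\<lambda>x. d * x) ` A)}"
    by (intro gen_least) auto
  then show "(\<lambda>x. d * x) ` gen A \<subseteq> gen ((\<lambda>x. d * x) ` A)" by auto
qed

lemma gen_two: "gen {a, b} = {a * s + b * k | s k. True}"
  unfolding gen_insert[of a] gen_insert[of b] gen_empty by (auto simp: algebra_simps; metis add.commute mult.commute)



definition Gf :: "nat \<Rightarrow> nat \<Rightarrow> int fps" where "Gf k c = (\<Sum>j<k. fps_X^(c*j))"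
definition EE :: "nat \<Rightarrow> int fps" where "EE c = 1 - fps_X^c"

lemma hilb_pow_1: "hilb_pow S 1 = hilb S"
  unfolding hilb_pow_def hilb_def by auto

lemma hilb_pow_eq: "hilb_pow S w = hilb ((\<lambda>s. w*s) ` S)"
  unfolding hilb_pow_def hilb_def by (intro arg_cong[where f=Abs_fps] ext) (auto simp: image_iff)

lemma EG: "EE c * Gf k c = EE (c*k)"
proof (induction k)
  case 0 then show ?case by (simp add: EE_def Gf_def)
next
  case (Suc k)
  have "EE c * Gf (Suc k) c = EE c * Gf k c + EE c * fps_X^(c*k)"
    by (simp add: Gf_def algebra_simps)
  also have "\<dots> = EE (c * Suc k)" using Suc
    by (simp add: EE_def algebra_simps power_add)
  finally show ?case .
qed

lemma EE_nz: "c \<ge> 1 \<Longrightarrow> EE c \<noteq> 0"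
proof
  assume "c \<ge> 1" "EE c = 0"
  then have "(EE c) $ 0 = 0" by simp
  with \<open>c \<ge> 1\<close> show False by (simp add: EE_def)
qed

lemma EH: assumes "c \<ge> 1" shows "EE c * hilb_pow UNIV c = 1"
proof (rule fps_ext)
  fix n
  have h: "hilb_pow UNIV c $ m = (if c dvd m then 1 else 0)" for m
    by (auto simp: hilb_pow_def dvd_def)
  have "(EE c * hilb_pow UNIV c) $ n = hilb_pow UNIV c $ n - (fps_X^c * hilb_pow UNIV c) $ n"
    by (simp add: EE_def algebra_simps)
  also have "\<dots> = (1::int fps) $ n"
  proof (cases "n < c")
    case True
    then have "c dvd n \<longleftrightarrow> n = 0" using dvd_imp_le by (cases "n = 0") auto
    then show ?thesis using True by (simp add: h fps_X_power_mult_nth)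
  next
    case False
    then have "c dvd (n - c) \<longleftrightarrow> c dvd n" by (simp add: dvd_minus_self)
    then show ?thesis using False assms by (simp add: h fps_X_power_mult_nth)
  qed
  finally show "(EE c * hilb_pow UNIV c) $ n = (1::int fps) $ n" .
qed

lemma Gf_poly: "\<exists>g. fps_of_poly g = Gf k c"
proof -
  have "fps_of_poly (\<Sum>j<k. monom 1 (c*j)) = Gf k c"
    by (simp add: fps_of_poly_sum fps_of_poly_monom' Gf_def)
  then show ?thesis by blast
qed

lemma GG: assumes "c \<ge> 1" shows "Gf k c * Gf l (c*k) = Gf (k*l) c"
proof -
  have "EE c * (Gf k c * Gf l (c*k)) = EE c * Gf (k*l) c"
    by (simp add: EG mult.assoc[symmetric])
  then show ?thesis using EE_nz[OF assms] by simp
qed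

lemma HH: assumes "c \<ge> 1" "k \<ge> 1" shows "hilb_pow UNIV (c*k) * Gf k c = hilb_pow UNIV c"
proof -
  have "EE c * (hilb_pow UNIV (c*k) * Gf k c) = EE c * hilb_pow UNIV c"
  proof -
    have "EE c * (hilb_pow UNIV (c*k) * Gf k c) = (EE c * Gf k c) * hilb_pow UNIV (c*k)"
      by (simp add: mult_ac)
    also have "\<dots> = 1" using EH[of "c*k"] assms by (simp add: EG)
    also have "\<dots> = EE c * hilb_pow UNIV c" using EH[of c] assms by simp
    finally show ?thesis .
  qed
  then show ?thesis using EE_nz[OF assms(1)] by simp
qed

lemma decomp:
  assumes fin: "finite F"
    and mem: "\<And>n. n \<in> T \<longleftrightarrow> (\<exists>f\<in>F. \<exists>s\<in>S. n = w*s + f)"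
    and uniq: "\<And>f f' s s'. f\<in>F \<Longrightarrow> f'\<in>F \<Longrightarrow> s\<in>S \<Longrightarrow> s'\<in>S \<Longrightarrow> w*s+f = w*s'+f' \<Longrightarrow> f = f'"
  shows "hilb T = hilb_pow S w * (\<Sum>f\<in>F. fps_X^f)"
proof (rule fps_ext)
  fix n
  have c: "(hilb_pow S w * fps_X^f) $ n = (if f \<in> F \<and> (\<exists>s\<in>S. n = w*s + f) then 1 else 0)" if "f \<in> F" for f
  proof (cases "n < f")
    case True
    then show ?thesis by (auto simp: fps_X_power_mult_right_nth)
  next
    case False
    then have "(\<exists>s\<in>S. n - f = w*s) \<longleftrightarrow> (\<exists>s\<in>S. n = w*s + f)"
      by (metis add_diff_cancel_right' le_add_diff_inverse2 not_less)
    then show ?thesis using False that by (simp add: fps_X_power_mult_right_nth hilb_pow_def)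
  qed
  have "(hilb_pow S w * (\<Sum>f\<in>F. fps_X^f)) $ n = (\<Sum>f\<in>F. (hilb_pow S w * fps_X^f) $ n)"
    by (simp add: sum_distrib_left fps_sum_nth)
  also have "\<dots> = (\<Sum>f\<in>F. (if f \<in> F \<and> (\<exists>s\<in>S. n = w*s + f) then 1 else 0))"
    using c by (intro sum.cong) auto
  also have "\<dots> = hilb T $ n"
  proof (cases "n \<in> T")
    case True
    then obtain f0 s0 where f0: "f0 \<in> F" "s0 \<in> S" "n = w*s0 + f0" using mem by blast
    have "(\<Sum>f\<in>F. (if f \<in> F \<and> (\<exists>s\<in>S. n = w*s + f) then 1 else 0)) = (\<Sum>f\<in>F. (if f = f0 then 1 else 0) :: int)"
    proof (intro sum.cong refl)
      fix f assume fF: "f \<in> F"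
      have "(\<exists>s\<in>S. n = w*s + f) \<longleftrightarrow> f = f0"
      proof
        assume "\<exists>s\<in>S. n = w*s + f"
        then obtain s where "s \<in> S" "n = w*s + f" by blast
        then show "f = f0" using uniq[OF fF f0(1) \<open>s \<in> S\<close> f0(2)] f0(3) by simp
      qed (use f0 in blast)
      then show "(if f \<in> F \<and> (\<exists>s\<in>S. n = w*s + f) then 1 else 0) = (if f = f0 then 1 else 0)"
        using fF by simp
    qed
    also have "\<dots> = 1" using fin f0 by simp
    finally show ?thesis using True by (simp add: hilb_def)
  next
    case False
    then have "\<not> (\<exists>f\<in>F. \<exists>s\<in>S. n = w*s + f)" using mem by blast
    then have "(\<Sum>f\<in>F. (if f \<in> F \<and> (\<exists>s\<in>S. n = w*s + f) then 1 else 0)) = (\<Sum>f\<in>F. 0::int)"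
      by (intro sum.cong) auto
    then show ?thesis using False by (simp add: hilb_def)
  qed
  finally show "hilb T $ n = (hilb_pow S w * (\<Sum>f\<in>F. fps_X^f)) $ n" by simp
qed

lemma uniq_res:
  fixes a b s s' j j' :: nat
  assumes "coprime a b" "j < a" "j' < a" "a*s + b*j = a*s' + b*j'"
  shows "j = j'"
proof -
  have "(b*j) mod a = (b*j') mod a"
    using arg_cong[OF assms(4), of "\<lambda>x. x mod a"] by simp
  then have "[b*j = b*j'] (mod a)" by (simp add: cong_def)
  then have "[j = j'] (mod a)" using assms(1) by (simp add: cong_mult_lcancel_nat coprime_commute)
  then show ?thesis using assms(2,3) by (simp add: cong_def)
qed

lemma glue:
  fixes a b w :: nat
  assumes cop: "coprime a b" and a1: "a \<ge> 1" and b1: "b \<ge> 1" and w1: "w \<ge> 1"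
    and bS: "b \<in> S" and cl: "\<And>s k. s \<in> S \<Longrightarrow> s + b*k \<in> S"
    and T: "T = {a*s + b*k | s k. s \<in> S}"
  shows "hilb_pow T w = hilb_pow S (w*a) * Gf a (w*b)"
proof -
  let ?F = "(\<lambda>j. w*b*j) ` {..<a}"
  have "hilb ((\<lambda>s. w*s) ` T) = hilb_pow S (w*a) * (\<Sum>f\<in>?F. fps_X^f)"
  proof (rule decomp)
    show "finite ?F" by simp
  next
    fix n
    show "n \<in> (\<lambda>s. w*s) ` T \<longleftrightarrow> (\<exists>f\<in>?F. \<exists>s\<in>S. n = w*a*s + f)"
    proof
      assume "n \<in> (\<lambda>s. w*s) ` T"
      then obtain s k where sk: "s \<in> S" "n = w*(a*s + b*k)" using T by auto
      have "n = w*a*(s + b*(k div a)) + w*b*(k mod a)"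
      proof -
        have "a*(s + b*(k div a)) + b*(k mod a) = a*s + b*(a*(k div a) + k mod a)"
          by (simp only: distrib_left mult.left_commute add_ac)
        also have "\<dots> = a*s + b*k" by (simp only: mult_div_mod_eq)
        finally have "a*s + b*k = a*(s + b*(k div a)) + b*(k mod a)" by simp
        then show ?thesis using sk(2) by (simp add: algebra_simps)
      qed
      moreover have "k mod a < a" using a1 by simp
      ultimately show "\<exists>f\<in>?F. \<exists>s\<in>S. n = w*a*s + f" using cl[OF sk(1)] by blast
    next
      assume "\<exists>f\<in>?F. \<exists>s\<in>S. n = w*a*s + f"
      then obtain j s where "s \<in> S" "n = w*a*s + w*b*j" by auto
      then have "s \<in> S" "n = w*(a*s + b*j)" by (auto simp: algebra_simps)
      then show "n \<in> (\<lambda>s. w*s) ` T" using T by blast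
    qed
  next
    fix f f' s s' assume "f \<in> ?F" "f' \<in> ?F" "s \<in> S" "s' \<in> S" "w*a*s + f = w*a*s' + f'"
    then obtain j j' where jj: "j < a" "j' < a" "f = w*b*j" "f' = w*b*j'" "w*(a*s+b*j) = w*(a*s'+b*j')"
      by (auto simp: algebra_simps)
    then have "a*s+b*j = a*s'+b*j'" using w1 by simp
    then have "j = j'" using uniq_res[OF cop jj(1,2)] by blast
    then show "f = f'" using jj by simp
  qed
  moreover have "(\<Sum>f\<in>?F. fps_X^f) = Gf a (w*b)"
  proof -
    have "inj_on (\<lambda>j. w*b*j) {..<a}" using w1 b1 by (auto simp: inj_on_def)
    then show ?thesis unfolding Gf_def by (simp add: sum.reindex mult.assoc)
  qed
  ultimately show ?thesis by (simp add: hilb_pow_eq)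
qed



lemma numerical_mono:
  assumes "numerical_semigroup S" "S \<subseteq> T" "submonoid_nat T"
  shows "numerical_semigroup T"
  using assms unfolding numerical_semigroup_def
  by (meson Diff_mono finite_subset order_refl)

lemma numerical_two:
  fixes a b :: nat
  assumes cop: "coprime a b" and a1: "a \<ge> 1" and b1: "b \<ge> 1"
  shows "numerical_semigroup (gen {a, b})"
proof -
  let ?f = "\<lambda>j. (b*j) mod a"
  have inj: "inj_on ?f {..<a}"
  proof (rule inj_onI)
    fix j j' assume "j \<in> {..<a}" "j' \<in> {..<a}" "?f j = ?f j'"
    then have "[b*j = b*j'] (mod a)" by (simp add: cong_def)
    then have "[j = j'] (mod a)" using cop by (simp add: cong_mult_lcancel_nat coprime_commute)
    then show "j = j'" using \<open>j \<in> {..<a}\<close> \<open>j' \<in> {..<a}\<close> by (simp add: cong_def)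
  qed
  have sub: "?f ` {..<a} \<subseteq> {..<a}" using a1 by auto
  have surj: "?f ` {..<a} = {..<a}" by (rule endo_inj_surj[OF _ sub inj]) simp
  have memb: "n \<in> gen {a, b}" if "n \<ge> a*b" for n
  proof -
    have "n mod a \<in> ?f ` {..<a}" using a1 surj by simp
    then obtain j where j: "j < a" "(b*j) mod a = n mod a" by auto
    have "b*j \<le> b*a" using j(1) by simp
    moreover have "b*a = a*b" by simp
    ultimately have le: "b*j \<le> n" using that by linarith
    then have "a dvd n - b*j" using j(2) mod_eq_dvd_iff_nat[OF le, of a] by simp
    then obtain s where "n - b*j = a*s" by blast
    then have "n = a*s + b*j" using le by simp
    then show ?thesis unfolding gen_two by blast
  qed
  then have "UNIV - gen {a, b} \<subseteq> {..<a*b}"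
  proof (intro subsetI)
    fix x assume "x \<in> UNIV - gen {a, b}"
    then show "x \<in> {..<a*b}" using memb by (meson DiffD2 lessThan_iff not_le)
  qed
  then show ?thesis unfolding numerical_semigroup_def using submonoid_gen finite_subset by blast
qed

lemma two_gen_hilb:
  fixes a b w :: nat
  assumes "coprime a b" "a \<ge> 1" "b \<ge> 1" "w \<ge> 1"
  shows "hilb_pow (gen {a, b}) w = hilb_pow UNIV (w*a) * Gf a (w*b)"
  by (rule glue[OF assms]) (auto simp: gen_two)

lemma poly_of_num:
  assumes "numerical_semigroup T" "c \<ge> 1"
  shows "\<exists>g. fps_of_poly g = EE c * hilb_pow T c"
proof -
  obtain N0 where N0: "\<And>n. n \<in> UNIV - T \<Longrightarrow> n < N0"
    using assms(1) unfolding numerical_semigroup_def finite_nat_set_iff_bounded by blast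
  let ?H = "EE c * hilb_pow T c"
  have coeff: "?H $ n = hilb_pow T c $ n - (if n < c then 0 else hilb_pow T c $ (n - c))" for n
    by (simp add: EE_def algebra_simps fps_X_power_mult_nth fps_X_power_mult_right_nth)
  have h: "hilb_pow T c $ m = (if \<exists>s\<in>T. m = c*s then 1 else 0)" for m
    by (simp add: hilb_pow_def)
  have z: "?H $ n = 0" if "n \<ge> c*(N0+1)" for n
  proof (cases "c dvd n")
    case True
    then obtain s where s: "n = c*s" by blast
    then have hh: "c*(N0+1) \<le> c*s" using that by simp
    have "0 < c" using assms(2) by simp
    then have "s \<ge> N0 + 1" using hh mult_le_cancel1 by blast
    have "s \<in> T"
    proof (rule ccontr)
      assume "s \<notin> T" then have "s < N0" using N0 by blast
      then show False using \<open>s \<ge> N0+1\<close> by linarith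
    qed
    have "s - 1 \<in> T"
    proof (rule ccontr)
      assume "s - 1 \<notin> T" then have "s - 1 < N0" using N0 by blast
      then show False using \<open>s \<ge> N0+1\<close> by linarith
    qed
    have "c*1 \<le> c*s" by (rule mult_le_mono2) (use \<open>s \<ge> N0+1\<close> in simp)
    then have "n \<ge> c" using s by simp
    have "n - c = c*(s-1)" using s by (simp add: right_diff_distrib')
    have e1: "\<exists>s\<in>T. n = c*s" using s \<open>s \<in> T\<close> by blast
    have e2: "\<exists>s'\<in>T. n - c = c*s'" using \<open>n - c = c*(s-1)\<close> \<open>s-1 \<in> T\<close> by blast
    show ?thesis using e1 e2 \<open>n \<ge> c\<close> by (simp only: coeff h) simp
  next
    case False
    have "c*1 \<le> c*(N0+1)" by (rule mult_le_mono2) simp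
    then have "n \<ge> c" using that by linarith
    have n1: "\<not> (\<exists>s\<in>T. n = c*s)" using False by (auto simp: dvd_def)
    have n2: "\<not> (\<exists>s\<in>T. n - c = c*s)"
    proof
      assume "\<exists>s\<in>T. n - c = c*s"
      then obtain s where "n - c = c*s" by blast
      then have "n = c*(s+1)" using \<open>n \<ge> c\<close> by simp
      then show False using False by simp
    qed
    show ?thesis using n1 n2 by (simp only: coeff h) simp
  qed
  let ?g = "\<Sum>n<c*(N0+1). monom (?H $ n) n"
  have "fps_of_poly ?g = ?H"
  proof (rule fps_ext)
    fix n
    show "fps_of_poly ?g $ n = ?H $ n"
      using z[of n] by (auto simp: coeff_sum not_less)
  qed
  then show ?thesis by blast
qed

lemma gens_Suc:
  fixes p q M :: nat
  shows "{p ^ (Suc M - i) * q ^ i | i. i \<le> Suc M} =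
   insert (p ^ Suc M) ((\<lambda>x. q*x) ` {p ^ (M - i) * q ^ i | i. i \<le> M})"
proof (intro set_eqI iffI)
  fix x assume "x \<in> {p ^ (Suc M - i) * q ^ i | i. i \<le> Suc M}"
  then obtain i where i: "i \<le> Suc M" "x = p ^ (Suc M - i) * q ^ i" by blast
  show "x \<in> insert (p ^ Suc M) ((\<lambda>x. q*x) ` {p ^ (M - i) * q ^ i | i. i \<le> M})"
  proof (cases i)
    case 0 then show ?thesis using i by simp
  next
    case (Suc i')
    then have "x = q * (p ^ (M - i') * q ^ i')" using i by (simp add: mult_ac)
    then show ?thesis using i Suc by blast
  qed
next
  fix x assume "x \<in> insert (p ^ Suc M) ((\<lambda>x. q*x) ` {p ^ (M - i) * q ^ i | i. i \<le> M})"
  then consider "x = p ^ Suc M" | i where "i \<le> M" "x = q * (p ^ (M - i) * q ^ i)" by blast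
  then show "x \<in> {p ^ (Suc M - i) * q ^ i | i. i \<le> Suc M}"
  proof cases
    case 1 then show ?thesis by (intro CollectI exI[of _ 0]) simp
  next
    case 2 then show ?thesis by (intro CollectI exI[of _ "Suc i"]) (simp add: mult_ac)
  qed
qed

lemma B_0: "B_sg 0 p q = UNIV"
proof -
  have "{p ^ (0 - i) * q ^ i |i. i \<le> (0::nat)} = {1}" by auto
  then have "B_sg 0 p q = gen {1}" unfolding B_sg_def by simp
  also have "\<dots> = UNIV" unfolding gen_insert gen_empty by force
  finally show ?thesis .
qed

lemma B_Suc: "B_sg (Suc M) p q = {q*s + p^(Suc M)*k | s k. s \<in> B_sg M p q}"
proof -
  have "B_sg (Suc M) p q = {x + p^Suc M * k | x k. x \<in> (\<lambda>x. q*x) ` B_sg M p q}"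
    unfolding B_sg_def gens_Suc gen_insert gen_image_mult by (rule refl)
  also have "\<dots> = {q*s + p^(Suc M)*k | s k. s \<in> B_sg M p q}" by blast
  finally show ?thesis .
qed

lemma B_sub: "gen {p^N, q^N} \<subseteq> B_sg N p q"
  unfolding B_sg_def
proof (rule gen_mono)
  have "p^N \<in> {p ^ (N - i) * q ^ i | i. i \<le> N}" by (intro CollectI exI[of _ 0]) simp
  moreover have "q^N \<in> {p ^ (N - i) * q ^ i | i. i \<le> N}" by (intro CollectI exI[of _ N]) simp
  ultimately show "{p^N, q^N} \<subseteq> {p ^ (N - i) * q ^ i | i. i \<le> N}" by (simp only: insert_subset empty_subsetI)
qed

lemma B_pow_in: "p^(Suc M) \<in> B_sg M p q"
proof -
  have "p^M \<in> {p ^ (M - i) * q ^ i | i. i \<le> M}" by (intro CollectI exI[of _ 0]) simp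
  then have "p^M \<in> B_sg M p q" unfolding B_sg_def by (rule subsetD[OF gen_sub])
  then have "p * p^M \<in> B_sg M p q" unfolding B_sg_def by (rule gen_mult)
  then show ?thesis by simp
qed

lemma B_rec:
  assumes "coprime p q" "p \<ge> 1" "q \<ge> 1" "w \<ge> 1"
  shows "hilb_pow (B_sg (Suc M) p q) w = hilb_pow (B_sg M p q) (w*q) * Gf q (w*p^(Suc M))"
proof (rule glue)
  show "coprime q (p ^ Suc M)" using assms(1) coprime_commute coprime_power_right_iff by blast
  show "p ^ Suc M \<ge> 1" using assms(2) by simp
  show "p ^ Suc M \<in> B_sg M p q" by (rule B_pow_in)
  show "s + p ^ Suc M * k \<in> B_sg M p q" if "s \<in> B_sg M p q" for s k
  proof -
    have k: "k * p ^ Suc M \<in> B_sg M p q" using B_pow_in[of p M q] unfolding B_sg_def by (rule gen_mult)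
    have "s + k * p ^ Suc M \<in> B_sg M p q" using that k unfolding B_sg_def by (rule gen_add)
    then show ?thesis by (simp only: mult.commute)
  qed
  show "B_sg (Suc M) p q = {q * s + p ^ Suc M * k |s k. s \<in> B_sg M p q}" by (rule B_Suc)
  show "q \<ge> 1" by (rule assms(3))
  show "w \<ge> 1" by (rule assms(4))
qed



lemma hilb_pow_Suc0: "hilb_pow S (Suc 0) = hilb S"
  using hilb_pow_1 by simp

lemma B_num: assumes "coprime p q" "p \<ge> 1" "q \<ge> 1" shows "numerical_semigroup (B_sg N p q)"
proof (rule numerical_mono[OF numerical_two B_sub])
  show "coprime (p^N) (q^N)" using assms(1) by simp
  show "p^N \<ge> 1" "q^N \<ge> 1" using assms by simp_all
  show "submonoid_nat (B_sg N p q)" unfolding B_sg_def by (rule submonoid_gen)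
qed

lemma claimC:
  assumes cop: "coprime p q" and p1: "p \<ge> 1" and q1: "q \<ge> 1"
  shows "a \<ge> 1 \<Longrightarrow> w \<ge> 1 \<Longrightarrow>
    EE (w*p^a*q^(Suc b0)) * hilb_pow (B_sg b0 p q) (w*p^a) * hilb_pow (B_sg (a-1) p q) (w*q^(Suc b0))
    = hilb_pow (B_sg (a+b0) p q) w"
proof (induction b0 arbitrary: w)
  case 0
  obtain a0 where a: "a = Suc a0" using 0 by (cases a) auto
  have pos: "w*p^a \<ge> 1" using 0 p1 by simp
  have e1: "EE (w*p^a*q^(Suc 0)) = EE (w*p^a) * Gf q (w*p^a)" using EG[of "w*p^a" q] by simp
  have e2: "EE (w*p^a) * hilb_pow (B_sg 0 p q) (w*p^a) = 1" using EH[OF pos] by (simp add: B_0)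
  have r: "hilb_pow (B_sg (a+0) p q) w = hilb_pow (B_sg a0 p q) (w*q) * Gf q (w*p^(Suc a0))"
    using B_rec[OF cop p1 q1 0(2), of a0] a by simp
  have "EE (w*p^a*q^(Suc 0)) * hilb_pow (B_sg 0 p q) (w*p^a) * hilb_pow (B_sg (a-1) p q) (w*q^(Suc 0))
      = (EE (w*p^a) * hilb_pow (B_sg 0 p q) (w*p^a)) * (hilb_pow (B_sg a0 p q) (w*q) * Gf q (w*p^a))"
    unfolding e1 using a by (simp add: mult_ac)
  also have "\<dots> = hilb_pow (B_sg (a+0) p q) w" unfolding e2 r using a by simp
  finally show ?case .
next
  case (Suc b0)
  have wq: "w*q \<ge> 1" using Suc.prems q1 by simp
  have ih: "EE (w*q*p^a*q^(Suc b0)) * hilb_pow (B_sg b0 p q) (w*q*p^a) * hilb_pow (B_sg (a-1) p q) (w*q*q^(Suc b0))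
    = hilb_pow (B_sg (a+b0) p q) (w*q)" using Suc.IH[OF Suc.prems(1) wq] .
  have r1: "hilb_pow (B_sg (a + Suc b0) p q) w = hilb_pow (B_sg (a+b0) p q) (w*q) * Gf q (w*p^(Suc (a+b0)))"
    using B_rec[OF cop p1 q1 Suc.prems(2), of "a+b0"] by simp
  have wpa: "w*p^a \<ge> 1" using Suc.prems p1 by simp
  have r2: "hilb_pow (B_sg (Suc b0) p q) (w*p^a) = hilb_pow (B_sg b0 p q) (w*p^a*q) * Gf q (w*p^a*p^(Suc b0))"
    using B_rec[OF cop p1 q1 wpa, of b0] by simp
  have x1: "w*q*p^a*q^(Suc b0) = w*p^a*q^(Suc (Suc b0))" by (simp add: mult_ac)
  have x2: "w*q*p^a = w*p^a*q" by (simp add: mult_ac)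
  have x3: "w*q*q^(Suc b0) = w*q^(Suc (Suc b0))" by (simp add: mult_ac)
  have x4: "w*p^(Suc (a+b0)) = w*p^a*p^(Suc b0)" by (simp add: mult_ac power_add)
  have "EE (w*p^a*q^(Suc (Suc b0))) * hilb_pow (B_sg (Suc b0) p q) (w*p^a) * hilb_pow (B_sg (a-1) p q) (w*q^(Suc (Suc b0)))
     = (EE (w*q*p^a*q^(Suc b0)) * hilb_pow (B_sg b0 p q) (w*q*p^a) * hilb_pow (B_sg (a-1) p q) (w*q*q^(Suc b0)))
       * Gf q (w*p^(Suc (a+b0)))"
    unfolding r2 x1 x2 x3 x4 by (simp add: mult_ac)
  also have "\<dots> = hilb_pow (B_sg (a + Suc b0) p q) w" unfolding ih r1 ..
  finally show ?case .
qed

lemma partB_eq: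
  assumes cop: "coprime p q" and p1: "p \<ge> 1" and q1: "q \<ge> 1" and a1: "a \<ge> 1" and b1: "b \<ge> 1"
  shows "\<exists>g. hilb (gen {p^a, q^b}) * fps_of_poly g = hilb (B_sg (a+b-1) p q)"
proof -
  have pa: "p^a \<ge> 1" and qb: "q^b \<ge> 1" using p1 q1 by simp_all
  obtain g1 where g1: "fps_of_poly g1 = EE (p^a) * hilb_pow (B_sg (b-1) p q) (p^a)"
    using poly_of_num[OF B_num[OF cop p1 q1] pa] by blast
  obtain g2 where g2: "fps_of_poly g2 = EE (q^b) * hilb_pow (B_sg (a-1) p q) (q^b)"
    using poly_of_num[OF B_num[OF cop p1 q1] qb] by blast
  have hS: "hilb (gen {p^a, q^b}) = hilb_pow UNIV (p^a) * Gf (p^a) (q^b)"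
    using two_gen_hilb[of "p^a" "q^b" 1] cop pa qb by (simp add: hilb_pow_1 hilb_pow_Suc0)
  obtain b0 where b: "b = Suc b0" using b1 by (cases b) auto
  have cC: "EE (p^a*q^b) * hilb_pow (B_sg (b-1) p q) (p^a) * hilb_pow (B_sg (a-1) p q) (q^b)
    = hilb (B_sg (a+b-1) p q)"
    using claimC[OF cop p1 q1 a1, of 1 b0] b by (simp add: hilb_pow_1 hilb_pow_Suc0)
  have "hilb (gen {p^a, q^b}) * fps_of_poly (g1 * g2)
     = (EE (p^a) * hilb_pow UNIV (p^a)) * (EE (q^b) * Gf (p^a) (q^b))
       * hilb_pow (B_sg (b-1) p q) (p^a) * hilb_pow (B_sg (a-1) p q) (q^b)"
    unfolding fps_of_poly_mult g1 g2 hS by (simp add: mult_ac)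
  also have "\<dots> = hilb (B_sg (a+b-1) p q)"
    unfolding EH[OF pa] EG cC[symmetric] by (simp add: mult_ac)
  finally show ?thesis by blast
qed

lemma partA_eq:
  assumes cop: "coprime p q" and p1: "p \<ge> 1" and q1: "q \<ge> 1"
    and a: "1 \<le> a" "a \<le> m" and b: "1 \<le> b" "b \<le> n"
  shows "hilb_pow (gen {p^a, q^b}) (p^(m-a)*q^(n-b)) * (Gf (q^(n-b)) (p^m) * Gf (p^(m-a)) (q^n))
         = hilb (gen {p^m, q^n})"
proof -
  let ?w = "p^(m-a)*q^(n-b)"
  have w1: "?w \<ge> 1" using p1 q1 by simp
  have S: "hilb_pow (gen {p^a, q^b}) ?w = hilb_pow UNIV (?w*p^a) * Gf (p^a) (?w*q^b)"
    using two_gen_hilb[of "p^a" "q^b" ?w] cop p1 q1 w1 by simp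
  have e1: "?w*p^a = p^m*q^(n-b)"
    using a by (simp add: mult_ac power_add[symmetric])
  have e2: "?w*q^b = q^n*p^(m-a)"
    using b by (simp add: mult_ac power_add[symmetric])
  have hh: "hilb_pow UNIV (p^m*q^(n-b)) * Gf (q^(n-b)) (p^m) = hilb_pow UNIV (p^m)"
    using HH[of "p^m" "q^(n-b)"] p1 q1 by simp
  have gg: "Gf (p^(m-a)) (q^n) * Gf (p^a) (q^n*p^(m-a)) = Gf (p^m) (q^n)"
    using GG[of "q^n" "p^(m-a)" "p^a"] q1 a by (simp add: power_add[symmetric])
  have T: "hilb (gen {p^m, q^n}) = hilb_pow UNIV (p^m) * Gf (p^m) (q^n)"
    using two_gen_hilb[of "p^m" "q^n" 1] cop p1 q1 by (simp add: hilb_pow_1 hilb_pow_Suc0)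
  have "hilb_pow (gen {p^a, q^b}) ?w * (Gf (q^(n-b)) (p^m) * Gf (p^(m-a)) (q^n))
      = (hilb_pow UNIV (p^m*q^(n-b)) * Gf (q^(n-b)) (p^m)) * (Gf (p^(m-a)) (q^n) * Gf (p^a) (q^n*p^(m-a)))"
    unfolding S e1 e2 by (simp add: mult_ac)
  also have "\<dots> = hilb (gen {p^m, q^n})" unfolding hh gg T ..
  finally show ?thesis .
qed



lemma partC:
  fixes ns :: "nat list"
  assumes len: "length ns \<ge> 2" and pos: "\<forall>x\<in>set ns. x \<ge> 1"
    and num: "numerical_semigroup (gen (set ns))"
  shows "poly_related (gen ((\<lambda>x. x div Gcd (set (butlast ns))) ` set (butlast ns) \<union> {last ns})) (gen (set ns))"
proof -
  define bl where "bl = butlast ns"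
  define nk where "nk = last ns"
  define d where "d = Gcd (set bl)"
  define D where "D = (\<lambda>x. x div d) ` set bl"
  define U where "U = gen (insert nk D)"
  define V where "V = gen (set ns)"
  have ns_ne: "ns \<noteq> []" using len by auto
  have "set ns = set (bl @ [nk])" using append_butlast_last_id[OF ns_ne] unfolding bl_def nk_def by simp
  then have setns: "set ns = insert nk (set bl)" by simp
  have "length bl \<ge> 1" using len unfolding bl_def by simp
  then have bl_ne: "set bl \<noteq> {}" by auto
  have bl_pos: "\<forall>x\<in>set bl. x \<ge> 1" using pos setns by auto
  have nk1: "nk \<ge> 1" using pos setns by auto
  obtain x0 where "x0 \<in> set bl" using bl_ne by (meson ex_in_conv)
  then have "x0 \<ge> 1" using bl_pos by blast
  then have "\<not> set bl \<subseteq> {0}" using \<open>x0 \<in> set bl\<close> by auto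
  then have d0: "d \<noteq> 0" unfolding d_def by simp
  then have d1: "d \<ge> 1" by simp
  have dvd: "d dvd x" if "x \<in> set bl" for x unfolding d_def using that by (rule Gcd_dvd)
  have blD: "set bl = (\<lambda>x. d*x) ` D"
  proof -
    have "(\<lambda>x. d*x) ` D = (\<lambda>x. d*(x div d)) ` set bl" unfolding D_def image_image ..
    also have "\<dots> = (\<lambda>x. x) ` set bl"
      by (rule image_cong[OF refl]) (simp add: dvd)
    finally show ?thesis by simp
  qed
  have Ueq: "U = {y + nk*k | y k. y \<in> gen D}" unfolding U_def by (rule gen_insert)
  have Veq0: "V = {x + nk*k | x k. x \<in> (\<lambda>x. d*x) ` gen D}"
  proof -
    have "V = gen (insert nk ((\<lambda>x. d*x) ` D))" unfolding V_def setns blD ..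
    also have "\<dots> = {x + nk*k | x k. x \<in> gen ((\<lambda>x. d*x) ` D)}" by (rule gen_insert)
    finally show ?thesis by (simp only: gen_image_mult)
  qed
  have Veq: "V = {d*s + nk*k | s k. s \<in> U}"
  proof (intro set_eqI iffI)
    fix v assume "v \<in> V"
    then obtain y k where "y \<in> gen D" "v = d*y + nk*k" unfolding Veq0 by blast
    moreover have "y + nk*0 \<in> U" using \<open>y \<in> gen D\<close> unfolding Ueq by blast
    ultimately show "v \<in> {d*s + nk*k | s k. s \<in> U}" by force
  next
    fix v assume "v \<in> {d*s + nk*k | s k. s \<in> U}"
    then obtain s k where "s \<in> U" "v = d*s + nk*k" by blast
    then obtain y k1 where "y \<in> gen D" "v = d*(y + nk*k1) + nk*k" unfolding Ueq by blast
    then have "v = d*y + nk*(d*k1 + k)" by (simp add: algebra_simps)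
    then show "v \<in> V" unfolding Veq0 using \<open>y \<in> gen D\<close> by blast
  qed
  have nkU: "nk \<in> U" unfolding U_def using gen_sub by blast
  have clU: "s + nk*k \<in> U" if "s \<in> U" for s k
  proof -
    have "k*nk \<in> U" using nkU unfolding U_def by (rule gen_mult)
    then have "s + k*nk \<in> U" using that unfolding U_def by (intro gen_add)
    then show ?thesis by (simp add: mult.commute)
  qed
  have cop: "coprime d nk"
  proof (rule ccontr)
    assume nc: "\<not> coprime d nk"
    define g where "g = gcd d nk"
    have g1: "g \<noteq> 1" using nc unfolding g_def by (simp add: coprime_iff_gcd_eq_1)
    have g0: "g \<noteq> 0" using d0 unfolding g_def by simp
    have "submonoid_nat {x. g dvd x}" unfolding submonoid_nat_def by auto
    moreover have "set ns \<subseteq> {x. g dvd x}"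
    proof
      fix x assume "x \<in> set ns"
      then have "x = nk \<or> x \<in> set bl" using setns by auto
      then show "x \<in> {x. g dvd x}"
      proof
        assume "x = nk" then show ?thesis unfolding g_def by simp
      next
        assume "x \<in> set bl" then have "d dvd x" by (rule dvd)
        then show ?thesis unfolding g_def using dvd_trans gcd_dvd1 by blast
      qed
    qed
    ultimately have sub: "V \<subseteq> {x. g dvd x}" unfolding V_def by (rule gen_least[rotated])
    have "range (\<lambda>k. g*k + 1) \<subseteq> UNIV - V"
    proof
      fix x assume "x \<in> range (\<lambda>k. g*k + 1)"
      then obtain k where k: "x = g*k + 1" by blast
      have "x \<notin> V"
      proof
        assume "x \<in> V"
        then have "g dvd g*k + 1" using sub k by auto
        then have "g dvd 1" using dvd_add_right_iff[of g "g*k" 1] by (simp only: dvd_triv_left simp_thms)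
        then show False using g1 by simp
      qed
      then show "x \<in> UNIV - V" by simp
    qed
    moreover have "infinite (range (\<lambda>k. g*k + 1))"
      using g0 by (intro range_inj_infinite) (auto simp: inj_def)
    moreover have "finite (UNIV - V)" using num unfolding V_def numerical_semigroup_def by blast
    ultimately show False using finite_subset by blast
  qed
  obtain N0 where N0: "\<And>n. n \<in> UNIV - V \<Longrightarrow> n < N0"
    using num unfolding V_def numerical_semigroup_def finite_nat_set_iff_bounded by blast
  have mU: "m \<in> U" if "m \<ge> N0" for m
  proof -
    have dm: "d*m \<ge> m" using d1 by simp
    have "d*m \<in> V"
    proof (rule ccontr)
      assume "d*m \<notin> V" then have "d*m < N0" using N0 by blast
      then show False using dm that by linarith
    qed
    then obtain s k where sk: "s \<in> U" "d*m = d*s + nk*k" unfolding Veq by blast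
    then have "d dvd d*s + nk*k" by (metis dvd_triv_left)
    then have "d dvd nk*k" using dvd_add_right_iff[of d "d*s" "nk*k"] by (simp only: dvd_triv_left simp_thms)
    then have "d dvd k" using cop by (simp add: coprime_dvd_mult_right_iff)
    then obtain k' where k': "k = d*k'" by blast
    have "d*m = d*(s + nk*k')" using sk(2) k' by (simp add: algebra_simps)
    then have "m = s + nk*k'" using d0 by simp
    then show ?thesis using clU[OF sk(1)] by simp
  qed
  have "UNIV - U \<subseteq> {..<N0}"
  proof (intro subsetI)
    fix x assume "x \<in> UNIV - U"
    then have "\<not> x \<ge> N0" using mU by blast
    then show "x \<in> {..<N0}" by simp
  qed
  then have numU: "numerical_semigroup U"
    unfolding numerical_semigroup_def U_def using submonoid_gen finite_subset by blast
  have hV: "hilb_pow V 1 = hilb_pow U (1*d) * Gf d (1*nk)"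
    by (rule glue[OF cop d1 nk1 _ nkU clU Veq]) simp
  obtain f where f: "fps_of_poly f = Gf d nk" using Gf_poly by blast
  have rel: "hilb_pow U d * fps_of_poly f = hilb V" using hV f by (simp add: hilb_pow_Suc0)
  have "poly_related U V" unfolding poly_related_def using numU num rel d1 V_def by blast
  moreover have "(\<lambda>x. x div Gcd (set (butlast ns))) ` set (butlast ns) \<union> {last ns} = insert nk D"
    unfolding D_def d_def bl_def nk_def by simp
  ultimately show ?thesis unfolding U_def V_def by simp
qed



theorem corollary5:
  fixes p q :: nat
  assumes "prime p" and "prime q" and "p \<noteq> q"
  shows "(\<forall>a b m n :: nat. 1 \<le> a \<and> a \<le> m \<and> 1 \<le> b \<and> b \<le> n \<longrightarrow>
            poly_related (gen {p ^ a, q ^ b}) (gen {p ^ m, q ^ n}))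
       \<and> (\<forall>n a b :: nat. n \<ge> 1 \<and> a \<ge> 1 \<and> b \<ge> 1 \<and> 2 \<le> a + b \<and> a + b \<le> n + 1 \<longrightarrow>
            poly_related (gen {p ^ a, q ^ b}) (B_sg n p q))
       \<and> (\<forall>ns :: nat list. length ns \<ge> 2 \<and> (\<forall>x\<in>set ns. x \<ge> 1) \<and>
            numerical_semigroup (gen (set ns)) \<longrightarrow>
            (let d = Gcd (set (butlast ns)) in
              poly_related (gen ((\<lambda>x. x div d) ` set (butlast ns) \<union> {last ns})) (gen (set ns))))"
proof -
  have cop: "coprime p q" using assms by (rule primes_coprime)
  have p1: "p \<ge> 1" using assms(1) prime_gt_0_nat by (simp add: Suc_le_eq)
  have q1: "q \<ge> 1" using assms(2) prime_gt_0_nat by (simp add: Suc_le_eq)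
  have numS: "numerical_semigroup (gen {p^a, q^b})" for a b
    using numerical_two[of "p^a" "q^b"] cop p1 q1 by simp
  have A: "poly_related (gen {p ^ a, q ^ b}) (gen {p ^ m, q ^ n})"
    if h: "1 \<le> a \<and> a \<le> m \<and> 1 \<le> b \<and> b \<le> n" for a b m n
  proof -
    obtain f1 where f1: "fps_of_poly f1 = Gf (q^(n-b)) (p^m)" using Gf_poly by blast
    obtain f2 where f2: "fps_of_poly f2 = Gf (p^(m-a)) (q^n)" using Gf_poly by blast
    have e: "hilb_pow (gen {p^a, q^b}) (p^(m-a)*q^(n-b)) * fps_of_poly (f1*f2) = hilb (gen {p^m, q^n})"
      unfolding fps_of_poly_mult f1 f2 using partA_eq[OF cop p1 q1, of a m b n] h by simp
    have "p^(m-a)*q^(n-b) \<ge> 1" using p1 q1 by simp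
    then show ?thesis unfolding poly_related_def using numS e by blast
  qed
  have B: "poly_related (gen {p ^ a, q ^ b}) (B_sg n p q)"
    if h: "n \<ge> 1 \<and> a \<ge> 1 \<and> b \<ge> 1 \<and> 2 \<le> a + b \<and> a + b \<le> n + 1" for n a b
  proof -
    define b' where "b' = n + 1 - a"
    have bb: "b \<le> b'" "1 \<le> b'" "a + b' - 1 = n" using h unfolding b'_def by auto
    obtain f1 where f1: "fps_of_poly f1 = Gf (q^(b'-b)) (p^a)" using Gf_poly by blast
    obtain f2 where f2: "fps_of_poly f2 = Gf (p^(a-a)) (q^b')" using Gf_poly by blast
    have e1: "hilb_pow (gen {p^a, q^b}) (p^(a-a)*q^(b'-b)) * fps_of_poly (f1*f2) = hilb (gen {p^a, q^b'})"
      unfolding fps_of_poly_mult f1 f2 using partA_eq[OF cop p1 q1, of a a b b'] h bb by simp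
    obtain g where g: "hilb (gen {p^a, q^b'}) * fps_of_poly g = hilb (B_sg (a+b'-1) p q)"
      using partB_eq[OF cop p1 q1, of a b'] h bb by blast
    have "hilb_pow (gen {p^a, q^b}) (p^(a-a)*q^(b'-b)) * fps_of_poly (f1*f2*g) = hilb (B_sg n p q)"
      using e1 g bb(3) by (simp add: fps_of_poly_mult mult.assoc[symmetric])
    moreover have "p^(a-a)*q^(b'-b) \<ge> 1" using q1 by simp
    ultimately show ?thesis unfolding poly_related_def using numS B_num[OF cop p1 q1] by blast
  qed
  have C: "let d = Gcd (set (butlast ns)) in
              poly_related (gen ((\<lambda>x. x div d) ` set (butlast ns) \<union> {last ns})) (gen (set ns))"
    if h: "length ns \<ge> 2 \<and> (\<forall>x\<in>set ns. x \<ge> 1) \<and> numerical_semigroup (gen (set ns))" for ns :: "nat list"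
    unfolding Let_def using partC h by blast
  show ?thesis using A B C by blast
qed


end
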